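(* Let $G$ be a strongly regular graph with parameters $(n,d,\lambda,\mu)$ and restricted eigenvalues $r>s$, and suppose that the clique number satisfies $\omega(G)=1-d/s$. Let $m$ be the number of edges of $G$, let $\theta_1\ge\theta_2\ge\cdots\ge\theta_n$ be the eigenvalues of its adjacency matrix, let $n^+$ be the number of positive eigenvalues, write $\omega=\omega(G)$, and let $\ell=\min(n^+,\omega)$. Then \[ \theta_1^2+\theta_2^2+\cdots+\theta_\ell^2\le \frac{2m(\omega-1)}{\omega}. \]
   Context: A strongly regular graph with parameters $(n,d,\lambda,\mu)$ is a $d$-regular graph on $n$ vertices in which every pair of adjacent vertices has exactly $\lambda$ common neighbours and every pair of distinct non-adjacent vertices has exactly $\mu$ common neighbours. Its restricted eigenvalues $r>s$ are the adjacency eigenvalues other than the degree $d$ (those with eigenvectors orthogonal to the all-ones vector). Here $\mu$ denotes the SRG parameter, not an eigenvalue. *)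

theory Defs
  imports "Jordan_Normal_Form.Char_Poly"
begin

definition simple_graph :: "nat \<Rightarrow> (nat \<Rightarrow> nat \<Rightarrow> bool) \<Rightarrow> bool" where
  "simple_graph n E \<longleftrightarrow> (\<forall>i<n. \<forall>j<n. E i j = E j i) \<and> (\<forall>i<n. \<not> E i i)"

definition adj_mat :: "nat \<Rightarrow> (nat \<Rightarrow> nat \<Rightarrow> bool) \<Rightarrow> real mat" where
  "adj_mat n E = mat n n (\<lambda>(i,j). if E i j then 1 else 0)"

definition nbrs :: "nat \<Rightarrow> (nat \<Rightarrow> nat \<Rightarrow> bool) \<Rightarrow> nat \<Rightarrow> nat set" where
  "nbrs n E i = {j. j < n \<and> E i j}"

definition strongly_regular :: "nat \<Rightarrow> (nat \<Rightarrow> nat \<Rightarrow> bool) \<Rightarrow> nat \<Rightarrow> nat \<Rightarrow> nat \<Rightarrow> bool" where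
  "strongly_regular n E d lam mu \<longleftrightarrow> simple_graph n E \<and>
     (\<forall>i<n. card (nbrs n E i) = d) \<and>
     (\<forall>i<n. \<forall>j<n. E i j \<longrightarrow> card (nbrs n E i \<inter> nbrs n E j) = lam) \<and>
     (\<forall>i<n. \<forall>j<n. i \<noteq> j \<and> \<not> E i j \<longrightarrow> card (nbrs n E i \<inter> nbrs n E j) = mu)"

definition restricted_eigenvalue :: "nat \<Rightarrow> (nat \<Rightarrow> nat \<Rightarrow> bool) \<Rightarrow> real \<Rightarrow> bool" where
  "restricted_eigenvalue n E t \<longleftrightarrow>
     (\<exists>v. eigenvector (adj_mat n E) v t \<and> v \<bullet> vec n (\<lambda>_. 1) = 0)"

definition is_clique :: "nat \<Rightarrow> (nat \<Rightarrow> nat \<Rightarrow> bool) \<Rightarrow> nat set \<Rightarrow> bool" where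
  "is_clique n E C \<longleftrightarrow> C \<subseteq> {0..<n} \<and> (\<forall>x\<in>C. \<forall>y\<in>C. x \<noteq> y \<longrightarrow> E x y)"

definition clique_number :: "nat \<Rightarrow> (nat \<Rightarrow> nat \<Rightarrow> bool) \<Rightarrow> nat" where
  "clique_number n E = Max (card ` {C. is_clique n E C})"

definition num_edges :: "nat \<Rightarrow> (nat \<Rightarrow> nat \<Rightarrow> bool) \<Rightarrow> nat" where
  "num_edges n E = card {(i,j). i < j \<and> j < n \<and> E i j}"

end

theory Submission
  imports Defs "HOL-Computational_Algebra.Polynomial" "Jordan_Normal_Form.Schur_Decomposition"
begin

lemma sum_if_card: "(\<Sum>j<(n::nat). if P j then (1::real) else 0) = real (card {j. j < n \<and> P j})"
proof -
  have "(\<Sum>j<n. if P j then (1::real) else 0) = (\<Sum>j\<in>{j\<in>{..<n}. P j}. 1)"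
    by (rule sum.inter_filter[symmetric]) simp
  also have "{j\<in>{..<n}. P j} = {j. j < n \<and> P j}" by auto
  finally show ?thesis by simp
qed

lemma adj_carrier[simp]: "adj_mat n E \<in> carrier_mat n n"
  by (simp add: adj_mat_def)

lemma adj_dims[simp]: "dim_row (adj_mat n E) = n" "dim_col (adj_mat n E) = n"
  by (simp_all add: adj_mat_def)

lemma adj_index[simp]: "i < n \<Longrightarrow> j < n \<Longrightarrow> adj_mat n E $$ (i,j) = (if E i j then 1 else 0)"
  by (simp add: adj_mat_def)

lemma adj_mult_vec: "v \<in> carrier_vec n \<Longrightarrow> i < n \<Longrightarrow>
   (adj_mat n E *\<^sub>v v) $ i = (\<Sum>j<n. (if E i j then 1 else 0) * v $ j)"
  by (simp add: scalar_prod_def lessThan_atLeast0)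

lemma srg_simple: "strongly_regular n E d lam mu \<Longrightarrow> simple_graph n E"
  by (simp add: strongly_regular_def)

lemma rowsum:
  assumes "strongly_regular n E d lam mu" "i < n"
  shows "(\<Sum>j<n. if E i j then (1::real) else 0) = real d"
proof -
  have "card {j. j < n \<and> E i j} = d" using assms unfolding strongly_regular_def nbrs_def by auto
  thus ?thesis by (simp add: sum_if_card)
qed

lemma colsum:
  assumes "strongly_regular n E d lam mu" "j < n"
  shows "(\<Sum>i<n. if E i j then (1::real) else 0) = real d"
proof -
  have "(\<Sum>i<n. if E i j then (1::real) else 0) = (\<Sum>i<n. if E j i then (1::real) else 0)"
    using srg_simple[OF assms(1)] assms(2) unfolding simple_graph_def by (intro sum.cong) auto
  thus ?thesis using rowsum[OF assms] by simp
qed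

lemma eig_root:
  assumes "char_poly (adj_mat n E) = (\<Prod>t\<leftarrow>\<theta>. [:- t, 1:])"
  shows "eigenvalue (adj_mat n E) x \<longleftrightarrow> x \<in> set \<theta>"
proof -
  have "eigenvalue (adj_mat n E) x \<longleftrightarrow> poly (char_poly (adj_mat n E)) x = 0"
    by (rule eigenvalue_root_char_poly[OF adj_carrier])
  also have "\<dots> \<longleftrightarrow> (\<Prod>t\<leftarrow>\<theta>. poly [:- t, 1:] x) = 0"
    unfolding assms poly_prod_list by (simp add: o_def)
  also have "\<dots> \<longleftrightarrow> x \<in> set \<theta>" by (auto simp: prod_list_zero_iff image_iff)
  finally show ?thesis .
qed

lemma sum_eigvec:
  assumes srg: "strongly_regular n E d lam mu" and ev: "eigenvector (adj_mat n E) v t"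
  shows "t * (\<Sum>i<n. v $ i) = real d * (\<Sum>i<n. v $ i)"
proof -
  have v: "v \<in> carrier_vec n" using ev unfolding eigenvector_def by simp
  have Av: "adj_mat n E *\<^sub>v v = t \<cdot>\<^sub>v v" using ev unfolding eigenvector_def by simp
  have "t * (\<Sum>i<n. v $ i) = (\<Sum>i<n. (adj_mat n E *\<^sub>v v) $ i)"
    using v by (simp add: Av sum_distrib_left)
  also have "\<dots> = (\<Sum>i<n. \<Sum>j<n. (if E i j then 1 else 0) * v $ j)"
    using v by (intro sum.cong refl) (simp add: adj_mult_vec del: index_mult_mat_vec)
  also have "\<dots> = (\<Sum>j<n. \<Sum>i<n. (if E i j then 1 else 0) * v $ j)"
    by (rule sum.swap)
  also have "\<dots> = (\<Sum>j<n. (\<Sum>i<n. (if E i j then 1 else 0)) * v $ j)"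
    by (simp add: sum_distrib_right)
  also have "\<dots> = (\<Sum>j<n. real d * v $ j)"
    using colsum[OF srg] by (intro sum.cong) auto
  finally show ?thesis by (simp add: sum_distrib_left)
qed

lemma eig_orth:
  assumes srg: "strongly_regular n E d lam mu" and ev: "eigenvector (adj_mat n E) v t"
    and "t \<noteq> real d"
  shows "v \<bullet> vec n (\<lambda>_. 1) = 0"
proof -
  have "(\<Sum>i<n. v $ i) = 0" using sum_eigvec[OF srg ev] assms(3) by simp
  thus ?thesis by (simp add: scalar_prod_def lessThan_atLeast0)
qed

lemma eig_vals:
  assumes srg: "strongly_regular n E d lam mu"
    and only_rs: "\<forall>t. restricted_eigenvalue n E t \<longrightarrow> t = r \<or> t = s"
    and "eigenvalue (adj_mat n E) x"
  shows "x = real d \<or> x = r \<or> x = s"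
proof (cases "x = real d")
  case False
  from assms(3) obtain v where ev: "eigenvector (adj_mat n E) v x" unfolding eigenvalue_def by auto
  hence "restricted_eigenvalue n E x" using eig_orth[OF srg ev False] unfolding restricted_eigenvalue_def by auto
  thus ?thesis using only_rs by auto
qed simp


lemma eigvec_nz:
  assumes "eigenvector (adj_mat n E) v t"
  shows "v \<in> carrier_vec n" "adj_mat n E *\<^sub>v v = t \<cdot>\<^sub>v v" "\<exists>j<n. v $ j \<noteq> 0"
proof -
  show v: "v \<in> carrier_vec n" using assms unfolding eigenvector_def by simp
  show "adj_mat n E *\<^sub>v v = t \<cdot>\<^sub>v v" using assms unfolding eigenvector_def by simp
  have "v \<noteq> 0\<^sub>v n" using assms unfolding eigenvector_def by simp
  then show "\<exists>j<n. v $ j \<noteq> 0" using v by (auto simp: vec_eq_iff)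
qed

lemma eigvec_entry:
  assumes "eigenvector (adj_mat n E) v t" "i < n"
  shows "t * v $ i = (\<Sum>j<n. (if E i j then 1 else 0) * v $ j)"
proof -
  have "(adj_mat n E *\<^sub>v v) $ i = t * v $ i" using eigvec_nz[OF assms(1)] assms(2) by simp
  thus ?thesis using adj_mult_vec[OF eigvec_nz(1)[OF assms(1)] assms(2)] by simp
qed

lemma eig_bound:
  assumes srg: "strongly_regular n E d lam mu" and ev: "eigenvector (adj_mat n E) v t"
  shows "\<bar>t\<bar> \<le> real d"
proof -
  obtain j0 where j0: "j0 < n" "v $ j0 \<noteq> 0" using eigvec_nz(3)[OF ev] by auto
  define M where "M = Max ((\<lambda>j. \<bar>v $ j\<bar>) ` {..<n})"
  have fin: "finite ((\<lambda>j. \<bar>v $ j\<bar>) ` {..<n})" by simp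
  have ne: "(\<lambda>j. \<bar>v $ j\<bar>) ` {..<n} \<noteq> {}" using j0 by auto
  obtain i where i: "i < n" "\<bar>v $ i\<bar> = M" using Max_in[OF fin ne] unfolding M_def by auto
  have le: "\<And>j. j < n \<Longrightarrow> \<bar>v $ j\<bar> \<le> M" unfolding M_def by (rule Max_ge[OF fin]) auto
  have Mpos: "M > 0" using le[OF j0(1)] j0(2) by linarith
  have "\<bar>t\<bar> * M = \<bar>t * v $ i\<bar>" using i by (simp add: abs_mult)
  also have "\<dots> = \<bar>\<Sum>j<n. (if E i j then 1 else 0) * v $ j\<bar>" using eigvec_entry[OF ev i(1)] by simp
  also have "\<dots> \<le> (\<Sum>j<n. \<bar>(if E i j then 1 else 0) * v $ j\<bar>)" by (rule sum_abs)
  also have "\<dots> \<le> (\<Sum>j<n. (if E i j then 1 else 0) * M)"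
    by (intro sum_mono) (auto simp: le)
  also have "\<dots> = real d * M" unfolding sum_distrib_right[symmetric] using rowsum[OF srg i(1)] by simp
  finally show ?thesis using Mpos by simp
qed

lemma common_nbrs:
  assumes srg: "strongly_regular n E d lam mu" and ik: "i < n" "k < n"
  shows "(\<Sum>j<n. (if E i j then 1 else 0) * (if E j k then 1 else 0)) =
     real mu + (real lam - real mu) * (if E i k then 1 else 0) + (real d - real mu) * (if k = i then 1 else 0)"
proof -
  have sg: "simple_graph n E" using srg by (simp add: strongly_regular_def)
  have "(\<Sum>j<n. (if E i j then 1 else 0) * (if E j k then 1 else (0::real))) =
        (\<Sum>j<n. if E i j \<and> E j k then 1 else 0)" by (intro sum.cong) auto
  also have "\<dots> = real (card {j. j < n \<and> E i j \<and> E j k})" by (rule sum_if_card)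
  also have "{j. j < n \<and> E i j \<and> E j k} = nbrs n E i \<inter> nbrs n E k"
    using sg ik unfolding nbrs_def simple_graph_def by auto
  finally have eq: "(\<Sum>j<n. (if E i j then 1 else 0) * (if E j k then 1 else (0::real))) =
        real (card (nbrs n E i \<inter> nbrs n E k))" .
  show ?thesis
  proof (cases "k = i")
    case True
    then show ?thesis using eq srg ik unfolding strongly_regular_def simple_graph_def by auto
  next
    case False
    show ?thesis
    proof (cases "E i k")
      case True
      then show ?thesis using eq srg ik False unfolding strongly_regular_def by auto
    next
      case F2: False
      then show ?thesis using eq srg ik False unfolding strongly_regular_def by auto
    qed
  qed
qed

lemma restr_quad:
  assumes srg: "strongly_regular n E d lam mu" and re: "restricted_eigenvalue n E t"
  shows "t * t = (real lam - real mu) * t + (real d - real mu)"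
proof -
  obtain v where ev: "eigenvector (adj_mat n E) v t" and orth: "v \<bullet> vec n (\<lambda>_. 1) = 0"
    using re unfolding restricted_eigenvalue_def by auto
  have vc: "v \<in> carrier_vec n" using eigvec_nz(1)[OF ev] .
  have sum0: "(\<Sum>k<n. v $ k) = 0" using orth vc by (simp add: scalar_prod_def lessThan_atLeast0)
  obtain i where i: "i < n" "v $ i \<noteq> 0" using eigvec_nz(3)[OF ev] by auto
  let ?a = "\<lambda>i j. if E i j then 1 else (0::real)"
  have "t * t * v $ i = t * (\<Sum>j<n. ?a i j * v $ j)" using eigvec_entry[OF ev i(1)] by simp
  also have "\<dots> = (\<Sum>j<n. ?a i j * (t * v $ j))" by (simp add: sum_distrib_left algebra_simps)
  also have "\<dots> = (\<Sum>j<n. ?a i j * (\<Sum>k<n. ?a j k * v $ k))"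
    using eigvec_entry[OF ev] by (intro sum.cong) auto
  also have "\<dots> = (\<Sum>j<n. \<Sum>k<n. ?a i j * ?a j k * v $ k)"
    by (simp add: sum_distrib_left mult.assoc)
  also have "\<dots> = (\<Sum>k<n. \<Sum>j<n. ?a i j * ?a j k * v $ k)" by (rule sum.swap)
  also have "\<dots> = (\<Sum>k<n. (\<Sum>j<n. ?a i j * ?a j k) * v $ k)" by (simp add: sum_distrib_right)
  also have "\<dots> = (\<Sum>k<n. (real mu + (real lam - real mu) * ?a i k + (real d - real mu) * (if k = i then 1 else 0)) * v $ k)"
    using common_nbrs[OF srg i(1)] by (intro sum.cong) auto
  also have "\<dots> = (\<Sum>k<n. real mu * v $ k + (real lam - real mu) * (?a i k * v $ k)
      + (real d - real mu) * (if k = i then v $ i else 0))"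
    by (intro sum.cong) (simp_all add: algebra_simps)
  also have "\<dots> = real mu * (\<Sum>k<n. v $ k) + (real lam - real mu) * (\<Sum>k<n. ?a i k * v $ k)
      + (real d - real mu) * (\<Sum>k<n. (if k = i then v $ i else 0))"
    by (simp only: sum.distrib sum_distrib_left[symmetric])
  also have "(\<Sum>k<n. (if k = i then v $ i else 0)) = v $ i" using i(1) by simp
  also have "(\<Sum>k<n. ?a i k * v $ k) = t * v $ i" using eigvec_entry[OF ev i(1)] by simp
  finally have "t * t * v $ i = ((real lam - real mu) * t + (real d - real mu)) * v $ i"
    using sum0 by (simp add: algebra_simps)
  thus ?thesis using i(2) by simp
qed

lemma complete_restr:
  assumes srg: "strongly_regular n E d lam mu" and re: "restricted_eigenvalue n E t"
    and compl: "\<forall>i<n. \<forall>j<n. i \<noteq> j \<longrightarrow> E i j"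
  shows "t = -1"
proof -
  obtain v where ev: "eigenvector (adj_mat n E) v t" and orth: "v \<bullet> vec n (\<lambda>_. 1) = 0"
    using re unfolding restricted_eigenvalue_def by auto
  have vc: "v \<in> carrier_vec n" using eigvec_nz(1)[OF ev] .
  have sum0: "(\<Sum>k<n. v $ k) = 0" using orth vc by (simp add: scalar_prod_def lessThan_atLeast0)
  obtain i where i: "i < n" "v $ i \<noteq> 0" using eigvec_nz(3)[OF ev] by auto
  have sg: "simple_graph n E" using srg by (simp add: strongly_regular_def)
  have "t * v $ i = (\<Sum>j<n. (if E i j then 1 else 0) * v $ j)" using eigvec_entry[OF ev i(1)] .
  also have "\<dots> = (\<Sum>j<n. v $ j - (if j = i then v $ i else 0))"
    using compl sg i(1) unfolding simple_graph_def by (intro sum.cong) auto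
  also have "\<dots> = (\<Sum>j<n. v $ j) - v $ i" using i(1) by (simp add: sum_subtractf)
  finally have "(t + 1) * v $ i = 0" using sum0 by (simp add: algebra_simps)
  thus ?thesis using i(2) by (simp add: eq_neg_iff_add_eq_0)
qed

lemma r_nonneg:
  assumes srg: "strongly_regular n E d lam mu"
    and restr_r: "restricted_eigenvalue n E r"
    and restr_s: "restricted_eigenvalue n E s"
    and r_gt_s: "r > s"
  shows "r \<ge> 0"
proof (rule ccontr)
  assume "\<not> r \<ge> 0"
  hence rneg: "r < 0" by simp
  show False
  proof (cases "\<forall>i<n. \<forall>j<n. i \<noteq> j \<longrightarrow> E i j")
    case True
    then show False using complete_restr[OF srg restr_r] complete_restr[OF srg restr_s] r_gt_s by simp
  next
    case False
    then obtain i j where ij: "i < n" "j < n" "i \<noteq> j" "\<not> E i j" by auto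
    have "card (nbrs n E i \<inter> nbrs n E j) = mu" using srg ij unfolding strongly_regular_def by auto
    moreover have "card (nbrs n E i \<inter> nbrs n E j) \<le> card (nbrs n E i)"
      by (rule card_mono) (auto simp: nbrs_def)
    moreover have "card (nbrs n E i) = d" using srg ij unfolding strongly_regular_def by auto
    ultimately have mud: "real mu \<le> real d" by simp
    have qr: "r * r = (real lam - real mu) * r + (real d - real mu)" by (rule restr_quad[OF srg restr_r])
    have qs: "s * s = (real lam - real mu) * s + (real d - real mu)" by (rule restr_quad[OF srg restr_s])
    have "(r - s) * (r + s) = (r - s) * (real lam - real mu)" using qr qs by (simp add: algebra_simps)
    hence sum: "r + s = real lam - real mu" using r_gt_s by simp
    have h1: "r * r = (r + s) * r + (real d - real mu)" using qr sum by simp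
    have h2: "(r + s) * r = r * r + r * s" by (simp add: algebra_simps)
    have "r * s = real mu - real d" using h1 h2 by linarith
    moreover have "r * s > 0" using rneg r_gt_s by (simp add: mult_neg_neg)
    ultimately show False using mud by simp
  qed
qed


definition mtr :: "real mat \<Rightarrow> real" where "mtr M = (\<Sum>i<dim_row M. M $$ (i,i))"

lemma mtr_mult: "X \<in> carrier_mat n m \<Longrightarrow> Y \<in> carrier_mat m n \<Longrightarrow>
  mtr (X * Y) = (\<Sum>i<n. \<Sum>k<m. X $$ (i,k) * Y $$ (k,i))"
  unfolding mtr_def by (simp add: scalar_prod_def lessThan_atLeast0)

lemma mtr_comm:
  assumes "X \<in> carrier_mat n m" "Y \<in> carrier_mat m n"
  shows "mtr (X * Y) = mtr (Y * X)"
proof -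
  have "mtr (X * Y) = (\<Sum>i<n. \<Sum>k<m. X $$ (i,k) * Y $$ (k,i))" by (rule mtr_mult[OF assms])
  also have "\<dots> = (\<Sum>k<m. \<Sum>i<n. Y $$ (k,i) * X $$ (i,k))"
    by (subst sum.swap) (simp add: mult.commute)
  also have "\<dots> = mtr (Y * X)" by (rule mtr_mult[OF assms(2,1), symmetric])
  finally show ?thesis .
qed

lemma mtr_sim:
  assumes P: "P \<in> carrier_mat n n" and Q: "Q \<in> carrier_mat n n" and M: "M \<in> carrier_mat n n"
    and QP: "Q * P = 1\<^sub>m n"
  shows "mtr (P * M * Q) = mtr M"
proof -
  have "mtr (P * M * Q) = mtr (Q * (P * M))" by (rule mtr_comm) (use P M Q in auto)
  also have "Q * (P * M) = (Q * P) * M" using P M Q by simp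
  also have "\<dots> = M" using QP M by simp
  finally show ?thesis .
qed

lemma trace_facts:
  assumes srg: "strongly_regular n E d lam mu"
    and len: "length \<theta> = n"
    and cp: "char_poly (adj_mat n E) = (\<Prod>t\<leftarrow>\<theta>. [:- t, 1:])"
  shows "(\<Sum>i<n. \<theta> ! i) = 0" "(\<Sum>i<n. (\<theta> ! i)^2) = real n * real d"
proof -
  let ?A = "adj_mat n E"
  obtain B P Q where sd: "schur_decomposition ?A \<theta> = (B,P,Q)" by (cases "schur_decomposition ?A \<theta>") auto
  from schur_decomposition[OF adj_carrier cp sd]
  have sim: "similar_mat_wit ?A B P Q" and ut: "upper_triangular B" and dg: "diag_mat B = \<theta>" by auto
  from sim have Bc: "B \<in> carrier_mat n n" and Pc: "P \<in> carrier_mat n n" and Qc: "Q \<in> carrier_mat n n"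
    and QP: "Q * P = 1\<^sub>m n" and AB: "?A = P * B * Q"
    unfolding similar_mat_wit_def Let_def by auto
  have th: "\<And>i. i < n \<Longrightarrow> \<theta> ! i = B $$ (i,i)" using dg Bc unfolding diag_mat_def by auto
  have sg: "simple_graph n E" using srg by (simp add: strongly_regular_def)
  have "mtr ?A = mtr B" using mtr_sim[OF Pc Qc Bc QP] AB by simp
  moreover have "mtr ?A = 0" using sg unfolding mtr_def simple_graph_def by simp
  moreover have "mtr B = (\<Sum>i<n. \<theta> ! i)" using Bc th unfolding mtr_def by simp
  ultimately show "(\<Sum>i<n. \<theta> ! i) = 0" by simp
  have AA: "?A * ?A = P * (B * B) * Q"
  proof -
    have "?A * ?A = (P * B * Q) * (P * B * Q)" using AB by simp
    also have "\<dots> = P * B * (Q * P) * B * Q" using Pc Bc Qc by (simp add: assoc_mult_mat[of _ n n _ n _ n])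
    also have "\<dots> = P * (B * B) * Q" using Pc Bc Qc QP by (simp add: assoc_mult_mat[of _ n n _ n _ n])
    finally show ?thesis .
  qed
  have "mtr (?A * ?A) = mtr (B * B)" using mtr_sim[OF Pc Qc _ QP, of "B * B"] AA Bc by simp
  moreover have "mtr (?A * ?A) = real n * real d"
  proof -
    have "mtr (?A * ?A) = (\<Sum>i<n. \<Sum>k<n. ?A $$ (i,k) * ?A $$ (k,i))" by (rule mtr_mult) auto
    also have "\<dots> = (\<Sum>i<n. \<Sum>k<n. if E i k then 1 else 0)"
      using sg unfolding simple_graph_def by (intro sum.cong) auto
    also have "\<dots> = (\<Sum>i<n. real d)" using rowsum[OF srg] by (intro sum.cong) auto
    finally show ?thesis by simp
  qed
  moreover have "mtr (B * B) = (\<Sum>i<n. (\<theta> ! i)^2)"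
  proof -
    have "mtr (B * B) = (\<Sum>i<n. \<Sum>k<n. B $$ (i,k) * B $$ (k,i))" by (rule mtr_mult) (use Bc in auto)
    also have "\<dots> = (\<Sum>i<n. \<Sum>k<n. if k = i then (\<theta> ! i)^2 else 0)"
    proof (intro sum.cong refl)
      fix i k assume i: "i \<in> {..<n}" and k: "k \<in> {..<n}"
      show "B $$ (i,k) * B $$ (k,i) = (if k = i then (\<theta> ! i)^2 else 0)"
      proof (cases "k = i")
        case True then show ?thesis using th i by (simp add: power2_eq_square)
      next
        case False
        then have "k < i \<or> i < k" by auto
        then show ?thesis using ut Bc i k False unfolding upper_triangular_def by auto
      qed
    qed
    also have "\<dots> = (\<Sum>i<n. (\<theta> ! i)^2)" by simp
    finally show ?thesis .
  qed
  ultimately show "(\<Sum>i<n. (\<theta> ! i)^2) = real n * real d" by simp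
qed

lemma edges:
  assumes srg: "strongly_regular n E d lam mu"
  shows "2 * num_edges n E = n * d"
proof -
  have sg: "simple_graph n E" using srg by (simp add: strongly_regular_def)
  define T1 where "T1 = {(i,j). i < j \<and> j < n \<and> E i j}"
  define T2 where "T2 = {(i,j). j < i \<and> i < n \<and> E i j}"
  define T where "T = Sigma {..<n} (nbrs n E)"
  have fT: "finite T" unfolding T_def nbrs_def by auto
  have "card T = (\<Sum>i<n. card (nbrs n E i))" unfolding T_def
    by (rule card_SigmaI) (auto simp: nbrs_def)
  also have "\<dots> = (\<Sum>i<n. d)" using srg unfolding strongly_regular_def by (intro sum.cong) auto
  finally have cT: "card T = n * d" by simp
  have TU: "T = T1 \<union> T2" using sg unfolding T_def T1_def T2_def nbrs_def simple_graph_def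
    by (auto; metis linorder_neqE_nat)
  have dis: "T1 \<inter> T2 = {}" unfolding T1_def T2_def by auto
  have fin1: "finite T1" "finite T2" using fT TU by auto
  have "T2 = (\<lambda>(i,j). (j,i)) ` T1"
  proof
    show "T2 \<subseteq> (\<lambda>(i,j). (j,i)) ` T1"
    proof
      fix x assume "x \<in> T2"
      then obtain i j where x: "x = (i,j)" "j < i" "i < n" "E i j" unfolding T2_def by auto
      hence "(j,i) \<in> T1" using sg unfolding T1_def simple_graph_def by auto
      thus "x \<in> (\<lambda>(i,j). (j,i)) ` T1" using x by force
    qed
    show "(\<lambda>(i,j). (j,i)) ` T1 \<subseteq> T2" using sg unfolding T1_def T2_def simple_graph_def by auto
  qed
  moreover have "inj_on (\<lambda>(i,j). (j,i)) T1" by (auto simp: inj_on_def)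
  ultimately have "card T2 = card T1" by (simp add: card_image)
  moreover have "card T = card T1 + card T2" using TU dis fin1 by (simp add: card_Un_disjoint)
  moreover have "num_edges n E = card T1" unfolding num_edges_def T1_def by simp
  ultimately show ?thesis using cT by simp
qed


lemma prefix_pos:
  fixes xs :: "real list"
  assumes sorted: "sorted_wrt (\<ge>) xs" and i: "i < length (filter (\<lambda>t. t > 0) xs)"
  shows "xs ! i > 0"
proof (rule ccontr)
  assume "\<not> xs ! i > 0"
  hence xi: "xs ! i \<le> 0" by simp
  have "{j. j < length xs \<and> xs ! j > 0} \<subseteq> {..<i}"
  proof
    fix j assume j: "j \<in> {j. j < length xs \<and> xs ! j > 0}"
    show "j \<in> {..<i}"
    proof (rule ccontr)
      assume "j \<notin> {..<i}"
      hence "i \<le> j" by simp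
      moreover have "i \<noteq> j" using j xi by auto
      ultimately have "i < j" by simp
      hence "xs ! i \<ge> xs ! j" using sorted_wrt_nth_less[OF sorted _ ] j by auto
      thus False using j xi by auto
    qed
  qed
  hence "card {j. j < length xs \<and> xs ! j > 0} \<le> card {..<i}" by (intro card_mono) auto
  thus False using i by (simp add: length_filter_conv_card)
qed

theorem mainTheorem4:
  fixes n d lam mu :: nat and E :: "nat \<Rightarrow> nat \<Rightarrow> bool"
    and r s :: real and \<theta> :: "real list"
  assumes srg: "strongly_regular n E d lam mu"
    and restr_r: "restricted_eigenvalue n E r"
    and restr_s: "restricted_eigenvalue n E s"
    and r_gt_s: "r > s"
    and only_rs: "\<forall>t. restricted_eigenvalue n E t \<longrightarrow> t = r \<or> t = s"
    and omega: "real (clique_number n E) = 1 - real d / s"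
    and theta_len: "length \<theta> = n"
    and theta_sorted: "sorted_wrt (\<ge>) \<theta>"
    and theta_eig: "char_poly (adj_mat n E) = (\<Prod>t\<leftarrow>\<theta>. [:- t, 1:])"
  shows "(\<Sum>i < min (length (filter (\<lambda>t. t > 0) \<theta>)) (clique_number n E). (\<theta> ! i)\<^sup>2)
           \<le> 2 * real (num_edges n E) * (real (clique_number n E) - 1) / real (clique_number n E)"
proof -
  let ?A = "adj_mat n E"
  let ?l = "min (length (filter (\<lambda>t. t > 0) \<theta>)) (clique_number n E)"
  define D where "D = real d"
  have vals: "\<And>i. i < n \<Longrightarrow> \<theta> ! i = D \<or> \<theta> ! i = r \<or> \<theta> ! i = s"
  proof -
    fix i assume "i < n"
    hence "\<theta> ! i \<in> set \<theta>" using theta_len by simp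
    hence "eigenvalue ?A (\<theta> ! i)" using eig_root[OF theta_eig] by simp
    thus "\<theta> ! i = D \<or> \<theta> ! i = r \<or> \<theta> ! i = s" using eig_vals[OF srg only_rs] D_def by blast
  qed
  obtain vr where evr: "eigenvector ?A vr r" using restr_r unfolding restricted_eigenvalue_def by auto
  have r_in: "r \<in> set \<theta>" using eig_root[OF theta_eig] evr unfolding eigenvalue_def by auto
  have rd: "r \<le> D" using eig_bound[OF srg evr] D_def by simp
  have r0: "r \<ge> 0" by (rule r_nonneg[OF srg restr_r restr_s r_gt_s])
  have tr: "(\<Sum>i<n. \<theta> ! i) = 0" "(\<Sum>i<n. (\<theta> ! i)^2) = real n * D"
    using trace_facts[OF srg theta_len theta_eig] D_def by auto
  have D0: "D \<ge> 0" unfolding D_def by simp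
  have s0: "s < 0"
  proof (rule ccontr)
    assume "\<not> s < 0"
    hence nn: "\<And>i. i < n \<Longrightarrow> \<theta> ! i \<ge> 0" using vals D0 r_gt_s by fastforce
    have "\<forall>i\<in>{..<n}. \<theta> ! i = 0" using sum_nonneg_eq_0_iff[of "{..<n}" "\<lambda>i. \<theta> ! i"] tr(1) nn by auto
    moreover obtain j where "j < n" "\<theta> ! j = r" using r_in theta_len by (auto simp: in_set_conv_nth)
    ultimately have "r = 0" by auto
    thus False using r_gt_s \<open>\<not> s < 0\<close> by simp
  qed
  define S where "S = - s"
  have S0: "S > 0" using s0 S_def by simp
  define \<phi> where "\<phi> = (\<lambda>x::real. if x > 0 then x^2 else 0)"
  have pw: "\<And>i. i < n \<Longrightarrow> (D + S) * \<phi> (\<theta> ! i) \<le> D * ((\<theta> ! i)^2 + S * \<theta> ! i)"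
  proof -
    fix i assume i: "i < n"
    consider "\<theta> ! i = D" | "\<theta> ! i = r" | "\<theta> ! i = s" using vals[OF i] by blast
    then show "(D + S) * \<phi> (\<theta> ! i) \<le> D * ((\<theta> ! i)^2 + S * \<theta> ! i)"
    proof cases
      case 1 then show ?thesis using D0 S0 unfolding \<phi>_def by (simp add: power2_eq_square algebra_simps)
    next
      case 2
      have "S * (r * r) \<le> S * (D * r)" using rd r0 S0 by (intro mult_left_mono mult_right_mono) auto
      then show ?thesis using 2 r0 D0 S0 unfolding \<phi>_def by (simp add: power2_eq_square algebra_simps)
    next
      case 3 then show ?thesis using s0 unfolding \<phi>_def S_def by (simp add: power2_eq_square algebra_simps)
    qed
  qed
  have "(D + S) * (\<Sum>i<n. \<phi> (\<theta> ! i)) = (\<Sum>i<n. (D + S) * \<phi> (\<theta> ! i))" by (simp add: sum_distrib_left)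
  also have "\<dots> \<le> (\<Sum>i<n. D * ((\<theta> ! i)^2 + S * \<theta> ! i))" using pw by (intro sum_mono) auto
  also have "\<dots> = D * ((\<Sum>i<n. (\<theta> ! i)^2) + S * (\<Sum>i<n. \<theta> ! i))"
    by (simp only: sum_distrib_left[symmetric] sum.distrib)
  also have "\<dots> = real n * D * D" using tr by simp
  finally have key: "(D + S) * (\<Sum>i<n. \<phi> (\<theta> ! i)) \<le> real n * D * D" .
  have ln: "?l \<le> n" using theta_len length_filter_le[of "\<lambda>t. t > 0" \<theta>] by linarith
  have "(\<Sum>i < ?l. (\<theta> ! i)\<^sup>2) = (\<Sum>i < ?l. \<phi> (\<theta> ! i))"
  proof (intro sum.cong refl)
    fix i assume "i \<in> {..< ?l}"
    hence "\<theta> ! i > 0" using prefix_pos[OF theta_sorted] by auto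
    thus "(\<theta> ! i)\<^sup>2 = \<phi> (\<theta> ! i)" unfolding \<phi>_def by simp
  qed
  also have "\<dots> \<le> (\<Sum>i<n. \<phi> (\<theta> ! i))"
    by (rule sum_mono2) (use ln in \<open>auto simp: \<phi>_def\<close>)
  also have "\<dots> \<le> real n * D * D / (D + S)" using key S0 D0 by (simp add: field_simps)
  also have "real n * D * D / (D + S) = 2 * real (num_edges n E) * (real (clique_number n E) - 1) / real (clique_number n E)"
  proof -
    have m: "2 * real (num_edges n E) = real n * D"
      using edges[OF srg] D_def by (metis of_nat_mult of_nat_numeral)
    have w: "real (clique_number n E) = (D + S) / S" using omega S0 unfolding S_def D_def by (simp add: field_simps)
    show ?thesis unfolding m w using S0 D0 by (simp add: field_simps)
  qed
  finally show ?thesis .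
qed

end
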